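(* Let $G=(V,E)$ be a connected regular graph and let $p_k(x,y)$ be the $k$-step transition probabilities of simple random walk on $G$. For every $n\ge1$, the kernel $g_n(x,y)=\sum_{2^n-2\le k<2^{n+1}-2}p_k(x,y)$ is symmetric and positive semi-definite (i.e. $\sum_{x,y}f(x)g_n(x,y)f(y)\ge0$ for every finitely supported $f:V\to\mathbb{R}$). Moreover $g_n(x,y)\ge0$, $g_n(x,y)=0$ whenever $d(x,y)>2^{n+1}-2$, and, if $G$ is transient, $\sum_{n\ge1}g_n(x,y)=g(x,y)$, the Green function.
   Context: $p_0(x,y)=1_{x=y}$. $d(x,y)$ is the graph distance. The Green function is $g(x,y)=\sum_{k\ge0}p_k(x,y)$. *)

theory Defs
  imports Complex_Main
begin

definition simple_graph :: "('a \<Rightarrow> 'a \<Rightarrow> bool) \<Rightarrow> bool" where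
  "simple_graph E \<longleftrightarrow> (\<forall>x y. E x y \<longrightarrow> E y x) \<and> (\<forall>x. \<not> E x x)"

definition nbrs :: "('a \<Rightarrow> 'a \<Rightarrow> bool) \<Rightarrow> 'a \<Rightarrow> 'a set" where
  "nbrs E x = {y. E x y}"

definition regular_graph :: "('a \<Rightarrow> 'a \<Rightarrow> bool) \<Rightarrow> bool" where
  "regular_graph E \<longleftrightarrow> (\<exists>d::nat. \<forall>x. finite (nbrs E x) \<and> card (nbrs E x) = d)"

definition edge_rel :: "('a \<Rightarrow> 'a \<Rightarrow> bool) \<Rightarrow> ('a \<times> 'a) set" where
  "edge_rel E = {(x, y). E x y}"

definition connected_graph :: "('a \<Rightarrow> 'a \<Rightarrow> bool) \<Rightarrow> bool" where
  "connected_graph E \<longleftrightarrow> (\<forall>x y. (x, y) \<in> (edge_rel E)\<^sup>*)"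

definition gdist :: "('a \<Rightarrow> 'a \<Rightarrow> bool) \<Rightarrow> 'a \<Rightarrow> 'a \<Rightarrow> nat" where
  "gdist E x y = (LEAST k. (x, y) \<in> edge_rel E ^^ k)"

fun srw_p :: "('a \<Rightarrow> 'a \<Rightarrow> bool) \<Rightarrow> nat \<Rightarrow> 'a \<Rightarrow> 'a \<Rightarrow> real" where
  "srw_p E 0 x y = (if x = y then 1 else 0)"
| "srw_p E (Suc k) x y = (\<Sum>z\<in>nbrs E x. srw_p E k z y) / real (card (nbrs E x))"

definition green :: "('a \<Rightarrow> 'a \<Rightarrow> bool) \<Rightarrow> 'a \<Rightarrow> 'a \<Rightarrow> real" where
  "green E x y = (\<Sum>k. srw_p E k x y)"

text \<open>Transience: the Green function is finite (expected number of visits finite).\<close>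
definition transient :: "('a \<Rightarrow> 'a \<Rightarrow> bool) \<Rightarrow> bool" where
  "transient E \<longleftrightarrow> (\<forall>x y. summable (\<lambda>k. srw_p E k x y))"

definition gblock :: "('a \<Rightarrow> 'a \<Rightarrow> bool) \<Rightarrow> nat \<Rightarrow> 'a \<Rightarrow> 'a \<Rightarrow> real" where
  "gblock E n x y = (\<Sum>k\<in>{2^n - 2 ..< 2^(n+1) - 2}. srw_p E k x y)"

end

theory Submission
  imports Defs
begin


lemma last_step:
  assumes sym: "\<And>x y. E x y \<Longrightarrow> E y x" and fin: "\<And>x. finite (nbrs E x)"
    and reg: "\<And>x. card (nbrs E x) = d"
  shows "srw_p E (Suc k) x y = (\<Sum>z\<in>nbrs E y. srw_p E k x z) / real d"
proof (induction k arbitrary: x y)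
  case 0
  have "(\<Sum>z\<in>nbrs E x. (if z = y then 1 else 0::real)) = (if y \<in> nbrs E x then 1 else 0)"
    using fin by (simp add: sum.delta)
  moreover have "(\<Sum>z\<in>nbrs E y. (if x = z then 1 else 0::real)) = (if x \<in> nbrs E y then 1 else 0)"
    using fin by (simp add: sum.delta)
  moreover have "(y \<in> nbrs E x) = (x \<in> nbrs E y)" using sym by (auto simp: nbrs_def)
  ultimately show ?case by (simp add: reg)
next
  case (Suc k)
  have "srw_p E (Suc (Suc k)) x y = (\<Sum>z\<in>nbrs E x. srw_p E (Suc k) z y) / real d"
    by (subst srw_p.simps(2)) (simp only: reg)
  also have "\<dots> = (\<Sum>z\<in>nbrs E x. (\<Sum>w\<in>nbrs E y. srw_p E k z w) / real d) / real d"
    by (simp only: Suc)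
  also have "\<dots> = (\<Sum>w\<in>nbrs E y. (\<Sum>z\<in>nbrs E x. srw_p E k z w) / real d) / real d"
    by (simp only: sum_divide_distrib[symmetric], subst sum.swap, rule refl)
  also have "\<dots> = (\<Sum>w\<in>nbrs E y. srw_p E (Suc k) x w) / real d"
    by (simp add: reg)
  finally show ?case .
qed

lemma p_sym:
  assumes sym: "\<And>x y. E x y \<Longrightarrow> E y x" and fin: "\<And>x. finite (nbrs E x)"
    and reg: "\<And>x. card (nbrs E x) = d"
  shows "srw_p E k x y = srw_p E k y x"
proof (induction k arbitrary: x y)
  case 0 then show ?case by simp
next
  case (Suc k)
  have "srw_p E (Suc k) x y = (\<Sum>z\<in>nbrs E x. srw_p E k y z) / real d"
    by (simp add: reg Suc)
  also have "\<dots> = srw_p E (Suc k) y x" using last_step[OF assms] by simp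
  finally show ?case .
qed

lemma p_nonneg: "srw_p E k x y \<ge> 0"
  by (induction k arbitrary: x y) (auto intro!: divide_nonneg_nonneg sum_nonneg)

lemma p_reach: "srw_p E k x y \<noteq> 0 \<Longrightarrow> (x, y) \<in> edge_rel E ^^ k"
proof (induction k arbitrary: x y)
  case 0 then show ?case by (simp split: if_splits)
next
  case (Suc k)
  then have "(\<Sum>z\<in>nbrs E x. srw_p E k z y) \<noteq> 0" by auto
  then obtain z where "z \<in> nbrs E x" "srw_p E k z y \<noteq> 0" by (meson sum.neutral)
  then have "(x, z) \<in> edge_rel E" "(z, y) \<in> edge_rel E ^^ k"
    using Suc.IH by (auto simp: nbrs_def edge_rel_def)
  then show ?case by (rule relpow_Suc_I2)
qed

lemma fin_reach:
  assumes sym: "\<And>x y. E x y \<Longrightarrow> E y x" and fin: "\<And>x. finite (nbrs E x)"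
  shows "finite {x. (x, y) \<in> edge_rel E ^^ i}"
proof (induction i)
  case 0 then show ?case by simp
next
  case (Suc i)
  have "{x. (x, y) \<in> edge_rel E ^^ Suc i} \<subseteq> (\<Union>z\<in>{x. (x, y) \<in> edge_rel E ^^ i}. nbrs E z)"
  proof
    fix x assume "x \<in> {x. (x, y) \<in> edge_rel E ^^ Suc i}"
    then have "(x, y) \<in> edge_rel E ^^ Suc i" by simp
    then have "\<exists>z. (x, z) \<in> edge_rel E \<and> (z, y) \<in> edge_rel E ^^ i" by (rule relpow_Suc_D2)
    then obtain z where "(x, z) \<in> edge_rel E" "(z, y) \<in> edge_rel E ^^ i" by blast
    then show "x \<in> (\<Union>z\<in>{x. (x, y) \<in> edge_rel E ^^ i}. nbrs E z)"
      using sym[of x z] by (auto simp: nbrs_def edge_rel_def)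
  qed
  then show ?case using Suc fin by (meson finite_UN_I finite_subset)
qed



lemma pair_sum: "(\<Sum>k\<in>{2*a..<2*b}. g k) = (\<Sum>j\<in>{a..<b}. g (2*j) + g (2*j+1))" for g :: "nat \<Rightarrow> real"
proof (induction b)
  case 0 then show ?case by simp
next
  case (Suc b)
  have e: "2 * Suc b = Suc (Suc (2*b))" by simp
  show ?case unfolding e using Suc by (simp add: add.commute)
qed

lemma block_pairs: "n \<ge> 1 \<Longrightarrow> gblock E n x y =
   (\<Sum>j\<in>{2^(n-1) - 1..<2^n - 1}. srw_p E (2*j) x y + srw_p E (2*j+1) x y)"
proof -
  assume n: "n \<ge> 1"
  have a: "(2::nat)^n - 2 = 2 * (2^(n-1) - 1)" using n
    by (metis Suc_diff_le diff_Suc_1 diff_mult_distrib2 mult.commute mult_1 power_Suc diff_le_self One_nat_def)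
  have b: "(2::nat)^(n+1) - 2 = 2 * (2^n - 1)" by (simp add: diff_mult_distrib2)
  show ?thesis unfolding gblock_def a b by (rule pair_sum)
qed

lemma telescope: "(\<Sum>n<N. gblock E (n+1) x y) = (\<Sum>k<2^(N+1)-2. srw_p E k x y)"
proof (induction N)
  case 0 then show ?case by (simp add: gblock_def)
next
  case (Suc N)
  have le: "(2::nat)^(N+1) - 2 \<le> 2^(N+2) - 2" by simp
  have "(\<Sum>n<Suc N. gblock E (n+1) x y) = (\<Sum>k<2^(N+1)-2. srw_p E k x y) + gblock E (N+1) x y"
    using Suc by simp
  also have "\<dots> = (\<Sum>k<2^(N+2)-2. srw_p E k x y)"
    unfolding gblock_def lessThan_atLeast0
    by (subst sum.atLeastLessThan_concat) (use le in \<open>auto simp: numeral_2_eq_2\<close>)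
  finally show ?case by (simp add: numeral_2_eq_2)
qed

lemma block_sums: assumes "summable (\<lambda>k. srw_p E k x y)"
  shows "(\<lambda>n. gblock E (n+1) x y) sums green E x y"
proof -
  have L: "(\<lambda>m. \<Sum>k<m. srw_p E k x y) \<longlonglongrightarrow> green E x y"
    unfolding green_def by (rule summable_LIMSEQ[OF assms])
  have sm: "strict_mono (\<lambda>N::nat. (2::nat)^(N+1) - 2)"
    unfolding strict_mono_Suc_iff
  proof
    fix N :: nat
    have "(2::nat) \<le> 2^(N+1)" by (metis add.commute le_add2 one_le_numeral power_increasing power_one_right plus_1_eq_Suc)
    moreover have "(2::nat)^(N+1) < 2^(Suc N+1)" by simp
    ultimately show "(2::nat)^(N+1) - 2 < 2^(Suc N+1) - 2" by linarith
  qed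
  have "((\<lambda>m. \<Sum>k<m. srw_p E k x y) \<circ> (\<lambda>N. 2^(N+1) - 2)) \<longlonglongrightarrow> green E x y"
    by (rule LIMSEQ_subseq_LIMSEQ[OF L sm])
  then show ?thesis unfolding sums_def o_def telescope[symmetric] .
qed

lemma block_nonneg: "gblock E n x y \<ge> 0"
  unfolding gblock_def by (rule sum_nonneg) (rule p_nonneg)

lemma block_far: assumes "gdist E x y > 2^(n+1) - 2" shows "gblock E n x y = 0"
  unfolding gblock_def
proof (rule sum.neutral, rule ballI, rule ccontr)
  fix k assume k: "k \<in> {2^n - 2..<2^(n+1) - 2}" and ne: "srw_p E k x y \<noteq> 0"
  have "gdist E x y \<le> k" unfolding gdist_def by (rule Least_le, rule p_reach[OF ne])
  with k assms show False by auto
qed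



definition Top :: "('a \<Rightarrow> 'a \<Rightarrow> bool) \<Rightarrow> ('a \<Rightarrow> real) \<Rightarrow> 'a \<Rightarrow> real" where
  "Top E h x = (\<Sum>z\<in>nbrs E x. h z) / real (card (nbrs E x))"

definition HH :: "('a \<Rightarrow> 'a \<Rightarrow> bool) \<Rightarrow> 'a set \<Rightarrow> ('a \<Rightarrow> real) \<Rightarrow> nat \<Rightarrow> 'a \<Rightarrow> real" where
  "HH E S f k x = (\<Sum>y\<in>S. srw_p E k x y * f y)"

lemma HH_Suc: "HH E S f (Suc k) x = Top E (HH E S f k) x"
proof -
  have "HH E S f (Suc k) x = (\<Sum>y\<in>S. (\<Sum>z\<in>nbrs E x. srw_p E k z y * f y)) / real (card (nbrs E x))"
    by (simp add: HH_def sum_divide_distrib sum_distrib_right)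
  also have "\<dots> = (\<Sum>z\<in>nbrs E x. (\<Sum>y\<in>S. srw_p E k z y * f y)) / real (card (nbrs E x))"
    by (subst sum.swap) (rule refl)
  finally show ?thesis by (simp add: Top_def HH_def)
qed

lemma mult_if0: "c * (if P then a else 0) = (if P then c * a else (0::real))"
  and mult_if0': "(if P then a else 0) * c = (if P then a * c else (0::real))"
  and div_if0: "(if P then a else 0) / c = (if P then a / c else (0::real))"
  by auto

lemma HH_0: "S = {x. f x \<noteq> 0} \<Longrightarrow> finite S \<Longrightarrow> HH E S f 0 x = f x"
proof -
  assume S: "S = {x. f x \<noteq> 0}" "finite S"
  have "HH E S f 0 x = (\<Sum>y\<in>S. if x = y then f y else 0)"
    unfolding HH_def by (intro sum.cong) auto
  also have "\<dots> = (if x \<in> S then f x else 0)" by (rule sum.delta'[OF S(2)])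
  finally show ?thesis using S by auto
qed

lemma HH_supp: "HH E S f k x \<noteq> 0 \<Longrightarrow> x \<in> (\<Union>y\<in>S. {x. (x, y) \<in> edge_rel E ^^ k})"
proof -
  assume "HH E S f k x \<noteq> 0"
  then obtain y where "y \<in> S" "srw_p E k x y * f y \<noteq> 0" unfolding HH_def by (meson sum.neutral)
  then show ?thesis using p_reach[of E k x y] by auto
qed

lemma nbr_sum:
  assumes fin: "\<And>x. finite (nbrs E x)" and U: "finite U" and h: "\<And>x. h x \<noteq> 0 \<Longrightarrow> x \<in> U"
  shows "(\<Sum>z\<in>nbrs E x. h z) = (\<Sum>z\<in>U. if E x z then h z else 0)"
proof -
  have "(\<Sum>z\<in>nbrs E x. h z) = (\<Sum>z\<in>nbrs E x \<inter> U. h z)"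
    by (rule sum.mono_neutral_right) (use fin h in auto)
  also have "\<dots> = (\<Sum>z\<in>U. if E x z then h z else 0)"
  proof -
    have "nbrs E x \<inter> U = {z\<in>U. E x z}" by (auto simp: nbrs_def)
    then show ?thesis using sum.inter_filter[OF U, of h "E x"] by simp
  qed
  finally show ?thesis .
qed

lemma adj1:
  assumes fin: "\<And>x. finite (nbrs E x)"
    and reg: "\<And>x. card (nbrs E x) = d"
    and U: "finite U" and h: "\<And>x. h x \<noteq> 0 \<Longrightarrow> x \<in> U"
  shows "(\<Sum>x\<in>U. g x * Top E h x) = (\<Sum>x\<in>U. \<Sum>z\<in>U. (if E x z then g x * h z else 0) / real d)"
proof (intro sum.cong refl)
  fix x
  have "g x * Top E h x = g x * (\<Sum>z\<in>U. if E x z then h z else 0) / real d"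
    by (simp add: Top_def reg nbr_sum[OF fin U h])
  also have "\<dots> = (\<Sum>z\<in>U. (if E x z then g x * h z else 0) / real d)"
    by (simp add: sum_divide_distrib[symmetric] sum_distrib_left mult_if0)
  finally show "g x * Top E h x = (\<Sum>z\<in>U. (if E x z then g x * h z else 0) / real d)" .
qed

lemma adj:
  assumes sym: "\<And>x y. E x y \<Longrightarrow> E y x" and fin: "\<And>x. finite (nbrs E x)"
    and reg: "\<And>x. card (nbrs E x) = d"
    and U: "finite U" and g: "\<And>x. g x \<noteq> 0 \<Longrightarrow> x \<in> U" and h: "\<And>x. h x \<noteq> 0 \<Longrightarrow> x \<in> U"
  shows "(\<Sum>x\<in>U. g x * Top E h x) = (\<Sum>x\<in>U. Top E g x * h x)"
proof -
  have symE: "\<And>a b. E a b = E b a" using sym by blast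
  have "(\<Sum>x\<in>U. g x * Top E h x) = (\<Sum>x\<in>U. \<Sum>z\<in>U. (if E x z then g x * h z else 0) / real d)"
    by (rule adj1[OF fin reg U h])
  also have "\<dots> = (\<Sum>z\<in>U. \<Sum>x\<in>U. (if E x z then g x * h z else 0) / real d)"
    by (rule sum.swap)
  also have "\<dots> = (\<Sum>z\<in>U. \<Sum>x\<in>U. (if E z x then h z * g x else 0) / real d)"
  proof (intro sum.cong refl)
    fix z x
    show "(if E x z then g x * h z else 0) / real d = (if E z x then h z * g x else 0) / real d"
      using symE[of x z] by (simp add: mult.commute)
  qed
  also have "\<dots> = (\<Sum>x\<in>U. h x * Top E g x)"
    by (rule adj1[OF fin reg U g, symmetric])
  also have "\<dots> = (\<Sum>x\<in>U. Top E g x * h x)"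
    by (simp add: mult.commute)
  finally show ?thesis .
qed

lemma pos_dummy: "True" by simp

lemma pos:
  assumes sym: "\<And>x y. E x y \<Longrightarrow> E y x" and fin: "\<And>x. finite (nbrs E x)"
    and reg: "\<And>x. card (nbrs E x) = d"
    and U: "finite U" and h: "\<And>x. h x \<noteq> 0 \<Longrightarrow> x \<in> U"
  shows "(\<Sum>x\<in>U. h x * (h x + Top E h x)) \<ge> 0"
proof (cases "d = 0")
  case True
  then have "\<And>x. Top E h x = 0" by (simp add: Top_def reg)
  then show ?thesis by (simp add: sum_nonneg)
next
  case False
  then have dpos: "real d > 0" by simp
  define A where "A = (\<Sum>x\<in>U. \<Sum>z\<in>U. if E x z then (h x)^2 else 0)"
  define B where "B = (\<Sum>x\<in>U. \<Sum>z\<in>U. if E x z then (h z)^2 else 0)"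
  define M where "M = (\<Sum>x\<in>U. \<Sum>z\<in>U. if E x z then h x * h z else 0)"
  have BA: "B = A"
  proof -
    have symE: "\<And>a b. E a b = E b a" using sym by blast
    show "B = A" unfolding A_def B_def by (subst sum.swap) (intro sum.cong refl if_cong symE)
  qed
  have "(\<Sum>x\<in>U. \<Sum>z\<in>U. - (if E x z then (h x)^2 else 0) - (if E x z then (h z)^2 else 0))
      \<le> (\<Sum>x\<in>U. \<Sum>z\<in>U. 2 * (if E x z then h x * h z else 0))"
  proof (intro sum_mono)
    fix x z
    have "0 \<le> (h x + h z)^2" by simp
    then show "- (if E x z then (h x)^2 else 0) - (if E x z then (h z)^2 else 0) \<le> 2 * (if E x z then h x * h z else 0)"
    proof (cases "E x z")
      case True
      have "(h x + h z)^2 = (h x)^2 + 2*(h x*h z) + (h z)^2" by (simp add: power2_sum)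
      with \<open>0 \<le> (h x + h z)^2\<close> True show ?thesis by simp
    qed simp
  qed
  then have "- A - B \<le> 2 * M"
    by (simp add: A_def B_def M_def sum_subtractf sum_negf sum_distrib_left)
  then have M1: "M \<ge> - A" using BA by linarith
  have "A = (\<Sum>x\<in>U. (h x)^2 * real (card {z\<in>U. E x z}))"
    unfolding A_def by (intro sum.cong refl) (simp add: sum.inter_filter[OF U, symmetric])
  also have "\<dots> \<le> (\<Sum>x\<in>U. (h x)^2 * real d)"
  proof (intro sum_mono mult_left_mono)
    fix x
    have "{z\<in>U. E x z} \<subseteq> nbrs E x" by (auto simp: nbrs_def)
    then have "card {z\<in>U. E x z} \<le> card (nbrs E x)" by (rule card_mono[OF fin])
    then show "real (card {z\<in>U. E x z}) \<le> real d" using reg by simp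
  qed simp
  finally have A1: "A \<le> (\<Sum>x\<in>U. (h x)^2) * real d" by (simp add: sum_distrib_right)
  have T: "(\<Sum>x\<in>U. h x * Top E h x) = M / real d"
    unfolding M_def sum_divide_distrib by (rule adj1[OF fin reg U h])
  have "M / real d \<ge> - (\<Sum>x\<in>U. (h x)^2)"
  proof -
    have "M \<ge> - ((\<Sum>x\<in>U. (h x)^2) * real d)" using M1 A1 by linarith
    then show ?thesis using dpos by (simp add: field_simps)
  qed
  moreover have "(\<Sum>x\<in>U. h x * (h x + Top E h x)) = (\<Sum>x\<in>U. (h x)^2) + M / real d"
    by (simp add: distrib_left sum.distrib power2_eq_square T)
  ultimately show ?thesis by linarith
qed



definition UU :: "('a \<Rightarrow> 'a \<Rightarrow> bool) \<Rightarrow> 'a set \<Rightarrow> nat \<Rightarrow> 'a set" where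
  "UU E S K = (\<Union>i\<le>K. \<Union>y\<in>S. {x. (x, y) \<in> edge_rel E ^^ i})"

lemma UU_fin:
  assumes sym: "\<And>x y. E x y \<Longrightarrow> E y x" and fin: "\<And>x. finite (nbrs E x)" and S: "finite S"
  shows "finite (UU E S K)"
  unfolding UU_def using fin_reach[OF sym fin] S by blast

lemma UU_supp: "i \<le> K \<Longrightarrow> HH E S f i x \<noteq> 0 \<Longrightarrow> x \<in> UU E S K"
proof -
  assume a: "i \<le> K" "HH E S f i x \<noteq> 0"
  from HH_supp[OF a(2)] obtain y where "y \<in> S" "(x, y) \<in> edge_rel E ^^ i" by blast
  then show ?thesis using a(1) unfolding UU_def by blast
qed

lemma UU_S: "S \<subseteq> UU E S K"
  unfolding UU_def by auto

lemma chain: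
  assumes sym: "\<And>x y. E x y \<Longrightarrow> E y x" and fin: "\<And>x. finite (nbrs E x)"
    and reg: "\<And>x. card (nbrs E x) = d" and S: "finite S"
  shows "a \<le> m \<Longrightarrow> m \<le> K \<Longrightarrow> (\<Sum>x\<in>UU E S K. HH E S f 0 x * HH E S f m x)
     = (\<Sum>x\<in>UU E S K. HH E S f a x * HH E S f (m - a) x)"
proof (induction a)
  case 0 then show ?case by simp
next
  case (Suc a)
  have e: "m - a = Suc (m - Suc a)" using Suc.prems by simp
  have mK: "m - Suc a \<le> K" using Suc.prems by simp
  have "(\<Sum>x\<in>UU E S K. HH E S f a x * HH E S f (m - a) x)
      = (\<Sum>x\<in>UU E S K. HH E S f a x * Top E (HH E S f (m - Suc a)) x)"
    unfolding e HH_Suc ..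
  also have "\<dots> = (\<Sum>x\<in>UU E S K. Top E (HH E S f a) x * HH E S f (m - Suc a) x)"
    by (rule adj[OF sym fin reg UU_fin[OF sym fin S]]) (use Suc.prems UU_supp[of a K] UU_supp[of "m - Suc a" K, OF mK] in auto)
  also have "\<dots> = (\<Sum>x\<in>UU E S K. HH E S f (Suc a) x * HH E S f (m - Suc a) x)"
    unfolding HH_Suc ..
  finally show ?case using Suc by simp
qed

lemma Q_eq:
  assumes S: "S = {x. f x \<noteq> 0}" "finite S" and U: "finite U" "S \<subseteq> U"
  shows "(\<Sum>x\<in>S. \<Sum>y\<in>S. f x * srw_p E m x y * f y) = (\<Sum>x\<in>U. HH E S f 0 x * HH E S f m x)"
proof -
  have "(\<Sum>x\<in>S. \<Sum>y\<in>S. f x * srw_p E m x y * f y) = (\<Sum>x\<in>S. f x * HH E S f m x)"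
    by (simp add: HH_def sum_distrib_left mult.assoc)
  also have "\<dots> = (\<Sum>x\<in>U. f x * HH E S f m x)"
    by (rule sum.mono_neutral_left) (use U S in auto)
  finally show ?thesis using HH_0[OF S] by simp
qed

lemma Q_pair:
  assumes sym: "\<And>x y. E x y \<Longrightarrow> E y x" and fin: "\<And>x. finite (nbrs E x)"
    and reg: "\<And>x. card (nbrs E x) = d" and S: "S = {x. f x \<noteq> 0}" "finite S"
  shows "(\<Sum>x\<in>S. \<Sum>y\<in>S. f x * (srw_p E (2*j) x y + srw_p E (2*j+1) x y) * f y) \<ge> 0"
proof -
  define U where "U = UU E S (2*j+1)"
  have U: "finite U" "S \<subseteq> U" unfolding U_def using UU_fin[OF sym fin S(2)] UU_S[of S E "2*j+1"] by auto
  have "(\<Sum>x\<in>S. \<Sum>y\<in>S. f x * (srw_p E (2*j) x y + srw_p E (2*j+1) x y) * f y)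
     = (\<Sum>x\<in>S. \<Sum>y\<in>S. f x * srw_p E (2*j) x y * f y) + (\<Sum>x\<in>S. \<Sum>y\<in>S. f x * srw_p E (2*j+1) x y * f y)"
    by (simp add: distrib_left distrib_right sum.distrib)
  also have "\<dots> = (\<Sum>x\<in>U. HH E S f 0 x * HH E S f (2*j) x) + (\<Sum>x\<in>U. HH E S f 0 x * HH E S f (2*j+1) x)"
    by (rule arg_cong2[where f="(+)"]) (rule Q_eq[OF S U])+
  also have "\<dots> = (\<Sum>x\<in>U. HH E S f j x * HH E S f j x) + (\<Sum>x\<in>U. HH E S f j x * HH E S f (j+1) x)"
    using chain[OF sym fin reg S(2), of j "2*j" "2*j+1" f] chain[OF sym fin reg S(2), of j "2*j+1" "2*j+1" f]
    unfolding U_def by (simp add: mult_2)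
  also have "\<dots> = (\<Sum>x\<in>U. HH E S f j x * (HH E S f j x + Top E (HH E S f j) x))"
    by (simp add: HH_Suc distrib_left sum.distrib)
  also have "\<dots> \<ge> 0"
  proof (rule pos[OF sym fin reg U(1)])
    fix x assume "HH E S f j x \<noteq> 0"
    then show "x \<in> U" unfolding U_def by (rule UU_supp[rotated]) simp
  qed
  finally show ?thesis .
qed

lemma psd:
  assumes sym: "\<And>x y. E x y \<Longrightarrow> E y x" and fin: "\<And>x. finite (nbrs E x)"
    and reg: "\<And>x. card (nbrs E x) = d" and S: "finite {x. f x \<noteq> 0}" and n: "n \<ge> 1"
  shows "(\<Sum>x\<in>{x. f x \<noteq> 0}. \<Sum>y\<in>{x. f x \<noteq> 0}. f x * gblock E n x y * f y) \<ge> 0"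
proof -
  let ?S = "{x. f x \<noteq> 0}" and ?J = "{2^(n-1) - 1..<2^n - 1::nat}"
  have "(\<Sum>x\<in>?S. \<Sum>y\<in>?S. f x * gblock E n x y * f y)
     = (\<Sum>x\<in>?S. \<Sum>y\<in>?S. \<Sum>j\<in>?J. f x * (srw_p E (2*j) x y + srw_p E (2*j+1) x y) * f y)"
    by (simp add: block_pairs[OF n] sum_distrib_left sum_distrib_right)
  also have "\<dots> = (\<Sum>x\<in>?S. \<Sum>j\<in>?J. \<Sum>y\<in>?S. f x * (srw_p E (2*j) x y + srw_p E (2*j+1) x y) * f y)"
    by (intro sum.cong refl) (rule sum.swap)
  also have "\<dots> = (\<Sum>j\<in>?J. \<Sum>x\<in>?S. \<Sum>y\<in>?S. f x * (srw_p E (2*j) x y + srw_p E (2*j+1) x y) * f y)"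
    by (rule sum.swap)
  also have "\<dots> \<ge> 0"
    by (rule sum_nonneg, rule Q_pair[OF sym fin reg refl S])
  finally show ?thesis .
qed


theorem mainTheorem6:
  fixes E :: "'a \<Rightarrow> 'a \<Rightarrow> bool"
  assumes "simple_graph E" and "regular_graph E" and "connected_graph E"
  shows "(\<forall>n\<ge>1.
      (\<forall>x y. gblock E n x y = gblock E n y x)
    \<and> (\<forall>f :: 'a \<Rightarrow> real. finite {x. f x \<noteq> 0} \<longrightarrow>
          (\<Sum>x\<in>{x. f x \<noteq> 0}. \<Sum>y\<in>{x. f x \<noteq> 0}. f x * gblock E n x y * f y) \<ge> 0)
    \<and> (\<forall>x y. gblock E n x y \<ge> 0)
    \<and> (\<forall>x y. gdist E x y > 2^(n+1) - 2 \<longrightarrow> gblock E n x y = 0))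
    \<and> (transient E \<longrightarrow> (\<forall>x y. (\<lambda>n. gblock E (n+1) x y) sums green E x y))"
proof -
  have sym: "\<And>x y. E x y \<Longrightarrow> E y x" using assms(1) unfolding simple_graph_def by blast
  obtain d where fd: "\<And>x. finite (nbrs E x) \<and> card (nbrs E x) = d"
    using assms(2) unfolding regular_graph_def by blast
  have fin: "\<And>x. finite (nbrs E x)" and reg: "\<And>x. card (nbrs E x) = d" using fd by auto
  have gs: "\<And>n x y. gblock E n x y = gblock E n y x"
    unfolding gblock_def by (intro sum.cong refl) (rule p_sym[OF sym fin reg])
  have P1: "\<forall>n\<ge>1.
      (\<forall>x y. gblock E n x y = gblock E n y x)
    \<and> (\<forall>f :: 'a \<Rightarrow> real. finite {x. f x \<noteq> 0} \<longrightarrow>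
          (\<Sum>x\<in>{x. f x \<noteq> 0}. \<Sum>y\<in>{x. f x \<noteq> 0}. f x * gblock E n x y * f y) \<ge> 0)
    \<and> (\<forall>x y. gblock E n x y \<ge> 0)
    \<and> (\<forall>x y. gdist E x y > 2^(n+1) - 2 \<longrightarrow> gblock E n x y = 0)"
  proof (intro allI impI conjI)
    fix n :: nat assume n: "n \<ge> 1"
    fix x y show "gblock E n x y = gblock E n y x" by (rule gs)
  next
    fix n :: nat and f :: "'a \<Rightarrow> real" assume n: "n \<ge> 1" and S: "finite {x. f x \<noteq> 0}"
    show "(\<Sum>x\<in>{x. f x \<noteq> 0}. \<Sum>y\<in>{x. f x \<noteq> 0}. f x * gblock E n x y * f y) \<ge> 0"
      by (rule psd[OF sym fin reg S n])
  next
    fix n :: nat and x y show "gblock E n x y \<ge> 0" by (rule block_nonneg)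
  next
    fix n :: nat and x y assume "gdist E x y > 2^(n+1) - 2"
    then show "gblock E n x y = 0" by (rule block_far)
  qed
  have P2: "transient E \<longrightarrow> (\<forall>x y. (\<lambda>n. gblock E (n+1) x y) sums green E x y)"
  proof (intro impI allI)
    fix x y assume "transient E"
    then have "summable (\<lambda>k. srw_p E k x y)" unfolding transient_def by blast
    then show "(\<lambda>n. gblock E (n+1) x y) sums green E x y" by (rule block_sums)
  qed
  show ?thesis using P1 P2 by (rule conjI)
qed

end
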